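(* Assume $\mathbb E f(\boldsymbol X)=0$ and $p_{\min}>0$. Let $J_1,J_2,\dots\subset\{1,\dots,M\}$ be any sequence of sets with $\#J_l\le2$, and define $R_0^\star\equiv0$, $R_l^\star(\boldsymbol X)=R_{l-1}^\star(\boldsymbol X)+\mathbb E(f(\boldsymbol X)-R_{l-1}^\star(\boldsymbol X)\mid\boldsymbol X_{\mathcal X(J_l)})$. Then for each $l>0$ and every $J\subset\{1,\dots,M\}$ with $\#J\le2$, $$|\mathbb E(f(\boldsymbol X)-R_{l-1}^\star(\boldsymbol X)\mid\boldsymbol X_{\mathcal X(J)})|\le 3\sqrt{\mathbb E[f(\boldsymbol X)^2]}\,p_{\min}^{-1}\quad\text{almost surely},$$ and for each $s>0$, $\iota_s\le 3s\sqrt{\mathbb E[f(\boldsymbol X)^2]}\,p_{\min}^{-1}$, where $\iota_s=\sum_{l=1}^s\max_{\vec c\in\{0,1\}^{\#\mathcal X(J_l)}}|\mathbb E[f(\boldsymbol X)-R_{l-1}^\star(\boldsymbol X)\mid\boldsymbol X_{\mathcal X(J_l)}=\vec c]|$.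
   Context: Setup. $\boldsymbol X=(X_1,\dots,X_p)^\top$ is a random vector in $\{0,1\}^p$; $\{1,\dots,p\}$ is partitioned into disjoint nonempty feature groups $\mathcal X(1),\dots,\mathcal X(M)$, $M\ge 2$; a group is either a single feature or has $\#\mathcal X(m)>1$ and consists of one-hot indicators ($\sum_{j\in\mathcal X(m)}\mathbf 1\{X_j=1\}=1$ a.s.). $\mathcal X(J)=\bigcup_{m\in J}\mathcal X(m)$, $\boldsymbol X_H=(X_j)_{j\in H}$. Convention: $\mathbb E(h(\boldsymbol X)\mid\boldsymbol X_H=\vec c)=0$ when $\mathbb P(\boldsymbol X_H=\vec c)=0$. $p_{\min}=\min_{1\le l<k\le M,\,i\in\mathcal X(l),\,j\in\mathcal X(k),\,(a,b)\in\{0,1\}^2}\mathbb P(X_i=a,X_j=b)$. $f:\{0,1\}^p\to\mathbb R$. *)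

theory Defs
  imports "HOL-Probability.Probability"
begin

text \<open>A feature vector in {0,1}^p is modelled as x :: nat \<Rightarrow> bool, with coordinates
  0..p-1 (X_j = 1 iff x j); the distribution of X is a pmf supported on vectors
  vanishing outside {0..<p}.\<close>

definition feat_vecs :: "nat \<Rightarrow> (nat \<Rightarrow> bool) set" where
  "feat_vecs p = {x. \<forall>j. p \<le> j \<longrightarrow> \<not> x j}"

definition Xset :: "(nat \<Rightarrow> nat set) \<Rightarrow> nat set \<Rightarrow> nat set" where
  "Xset G J = (\<Union>m\<in>J. G m)"

text \<open>E(h(X) | X_H = c), with the convention 0 when P(X_H = c) = 0.\<close>
definition cond_exp_at ::
  "(nat \<Rightarrow> bool) pmf \<Rightarrow> ((nat \<Rightarrow> bool) \<Rightarrow> real) \<Rightarrow> nat set \<Rightarrow> (nat \<Rightarrow> bool) \<Rightarrow> real" where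
  "cond_exp_at P h H c =
     (let A = {y. \<forall>j\<in>H. y j = c j} in
      if measure_pmf.prob P A = 0 then 0
      else measure_pmf.expectation P (\<lambda>y. h y * indicator A y) / measure_pmf.prob P A)"

definition cond_exp ::
  "(nat \<Rightarrow> bool) pmf \<Rightarrow> ((nat \<Rightarrow> bool) \<Rightarrow> real) \<Rightarrow> nat set \<Rightarrow> (nat \<Rightarrow> bool) \<Rightarrow> real" where
  "cond_exp P h H x = cond_exp_at P h H x"

primrec Rstar ::
  "(nat \<Rightarrow> bool) pmf \<Rightarrow> (nat \<Rightarrow> nat set) \<Rightarrow> ((nat \<Rightarrow> bool) \<Rightarrow> real) \<Rightarrow> (nat \<Rightarrow> nat set)
    \<Rightarrow> nat \<Rightarrow> (nat \<Rightarrow> bool) \<Rightarrow> real" where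
  "Rstar P G f J 0 = (\<lambda>x. 0)"
| "Rstar P G f J (Suc l) = (\<lambda>x. Rstar P G f J l x
      + cond_exp P (\<lambda>y. f y - Rstar P G f J l y) (Xset G (J (Suc l))) x)"

definition p_min :: "(nat \<Rightarrow> bool) pmf \<Rightarrow> (nat \<Rightarrow> nat set) \<Rightarrow> nat \<Rightarrow> real" where
  "p_min P G M = Min {measure_pmf.prob P {x. x i = a \<and> x j = b} | l k i j a b.
       l < k \<and> k < M \<and> i \<in> G l \<and> j \<in> G k}"

definition assignments :: "nat set \<Rightarrow> (nat \<Rightarrow> bool) set" where
  "assignments H = {c. \<forall>j. j \<notin> H \<longrightarrow> \<not> c j}"

definition iota ::
  "(nat \<Rightarrow> bool) pmf \<Rightarrow> (nat \<Rightarrow> nat set) \<Rightarrow> ((nat \<Rightarrow> bool) \<Rightarrow> real) \<Rightarrow> (nat \<Rightarrow> nat set) \<Rightarrow> nat \<Rightarrow> real" where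
  "iota P G f J s = (\<Sum>l=1..s. Max ((\<lambda>c. \<bar>cond_exp_at P (\<lambda>y. f y - Rstar P G f J (l - 1) y)
        (Xset G (J l)) c\<bar>) ` assignments (Xset G (J l))))"

end

theory Submission
  imports Defs
begin

lemma Ef:
  assumes "finite (set_pmf P)"
  shows "measure_pmf.expectation P h = (\<Sum>x\<in>set_pmf P. pmf P x * h x)"
  by (subst integral_measure_pmf_real[OF assms]) (auto simp: mult.commute)

lemma Pf:
  assumes "finite (set_pmf P)"
  shows "measure_pmf.prob P A = (\<Sum>x\<in>set_pmf P. pmf P x * indicator A x)"
proof -
  have "measure_pmf.prob P A = measure_pmf.prob P (set_pmf P \<inter> A)"
    using measure_Int_set_pmf[of P A] by (simp add: Int_commute)
  also have "\<dots> = sum (pmf P) (set_pmf P \<inter> A)"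
    using assms by (simp add: measure_measure_pmf_finite)
  also have "\<dots> = (\<Sum>x\<in>set_pmf P. pmf P x * indicator A x)"
    using assms by (simp add: sum.inter_restrict[where B=A, unfolded Collect_mem_eq] indicator_def if_distrib cong: if_cong)
  finally show ?thesis .
qed

lemma ce_cong:
  "{y. \<forall>j\<in>H. y j = c j} = {y. \<forall>j\<in>H. y j = d j} \<Longrightarrow> cond_exp_at P h H c = cond_exp_at P h H d"
  by (simp add: cond_exp_at_def Let_def)

lemma cls_pos:
  assumes "finite (set_pmf P)" "x \<in> set_pmf P"
  shows "measure_pmf.prob P {y. \<forall>j\<in>H. y j = x j} > 0"
proof -
  have "measure_pmf.prob P {y. \<forall>j\<in>H. y j = x j} \<ge> measure_pmf.prob P {x}"
    by (rule measure_pmf.finite_measure_mono) auto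
  moreover have "measure_pmf.prob P {x} > 0" using assms(2)
    by (simp add: measure_pmf_single pmf_positive)
  ultimately show ?thesis by linarith
qed


lemma ce_form:
  assumes fin: "finite (set_pmf P)" and x: "x \<in> set_pmf P"
  shows "cond_exp_at P g H x = (\<Sum>y\<in>set_pmf P. pmf P y * (g y * indicator {y. \<forall>j\<in>H. y j = x j} y))
           / (\<Sum>y\<in>set_pmf P. pmf P y * indicator {y. \<forall>j\<in>H. y j = x j} y)"
  using cls_pos[OF fin x, of H] unfolding cond_exp_at_def Let_def Ef[OF fin] Pf[OF fin] by simp

lemma tower:
  assumes fin: "finite (set_pmf P)"
    and rc: "\<And>x y. x \<in> set_pmf P \<Longrightarrow> y \<in> set_pmf P \<Longrightarrow> (\<forall>j\<in>H. y j = x j) \<Longrightarrow> r y = r x"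
  shows "(\<Sum>x\<in>set_pmf P. pmf P x * (cond_exp_at P g H x * r x)) = (\<Sum>x\<in>set_pmf P. pmf P x * (g x * r x))"
proof -
  define S where "S = set_pmf P"
  define w where "w = pmf P"
  define A where "A = (\<lambda>x::nat\<Rightarrow>bool. {y. \<forall>j\<in>H. y j = x j})"
  define pr where "pr = (\<lambda>x. (\<Sum>y\<in>S. w y * indicator (A x) y))"
  have finS: "finite S" using fin S_def by simp
  have prpos: "x \<in> S \<Longrightarrow> pr x > 0" for x
    using cls_pos[OF fin, of x H] unfolding pr_def S_def w_def A_def Pf[OF fin] by simp
  have q: "x \<in> S \<Longrightarrow> cond_exp_at P g H x = (\<Sum>y\<in>S. w y * (g y * indicator (A x) y)) / pr x" for x
    using ce_form[OF fin, of x g H] unfolding S_def w_def A_def pr_def by simp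
  have symA: "(y \<in> A x) = (x \<in> A y)" for x y unfolding A_def by auto
  have eqA: "y \<in> A x \<Longrightarrow> A y = A x" for x y unfolding A_def by auto
  have "(\<Sum>x\<in>S. w x * (cond_exp_at P g H x * r x))
      = (\<Sum>x\<in>S. \<Sum>y\<in>S. w x * w y * g y * indicator (A x) y * r x / pr x)"
    by (rule sum.cong[OF refl]) (simp add: q sum_distrib_left sum_distrib_right sum_divide_distrib mult_ac)
  also have "\<dots> = (\<Sum>y\<in>S. \<Sum>x\<in>S. w x * w y * g y * indicator (A x) y * r x / pr x)"
    by (rule sum.swap)
  also have "\<dots> = (\<Sum>y\<in>S. w y * g y * r y * (\<Sum>x\<in>S. w x * indicator (A y) x) / pr y)"
  proof (rule sum.cong[OF refl])
    fix y assume y: "y \<in> S"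
    have "(\<Sum>x\<in>S. w x * w y * g y * indicator (A x) y * r x / pr x)
        = (\<Sum>x\<in>S. w y * g y * r y * (w x * indicator (A y) x) / pr y)"
    proof (rule sum.cong[OF refl])
      fix x assume x: "x \<in> S"
      show "w x * w y * g y * indicator (A x) y * r x / pr x = w y * g y * r y * (w x * indicator (A y) x) / pr y"
      proof (cases "y \<in> A x")
        case True
        then have "x \<in> A y" using symA by blast
        moreover have "r x = r y" using rc[of y x] x y True unfolding S_def A_def by auto
        moreover have "pr x = pr y" using eqA[OF True] unfolding pr_def by simp
        ultimately show ?thesis using True by simp
      next
        case False
        then have "x \<notin> A y" using symA by blast
        then show ?thesis using False by simp
      qed
    qed
    then show "(\<Sum>x\<in>S. w x * w y * g y * indicator (A x) y * r x / pr x)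
        = w y * g y * r y * (\<Sum>x\<in>S. w x * indicator (A y) x) / pr y"
      by (simp add: sum_distrib_left sum_divide_distrib)
  qed
  also have "\<dots> = (\<Sum>y\<in>S. w y * (g y * r y))"
  proof (rule sum.cong[OF refl])
    fix y assume "y \<in> S"
    then have p: "pr y > 0" using prpos by blast
    have e: "(\<Sum>x\<in>S. w x * indicator (A y) x) = pr y" by (simp add: pr_def)
    show "w y * g y * r y * (\<Sum>x\<in>S. w x * indicator (A y) x) / pr y = w y * (g y * r y)"
      unfolding e using p by simp
  qed
  finally show ?thesis unfolding S_def w_def .
qed

lemma contract:
  assumes fin: "finite (set_pmf P)"
  shows "measure_pmf.expectation P (\<lambda>x. (g x - cond_exp P g H x)\<^sup>2) \<le> measure_pmf.expectation P (\<lambda>x. (g x)\<^sup>2)"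
proof -
  define q where "q = cond_exp_at P g H"
  have rc: "x \<in> set_pmf P \<Longrightarrow> y \<in> set_pmf P \<Longrightarrow> (\<forall>j\<in>H. y j = x j) \<Longrightarrow> q y = q x" for x y
    unfolding q_def by (rule ce_cong) auto
  have t: "(\<Sum>x\<in>set_pmf P. pmf P x * (q x * q x)) = (\<Sum>x\<in>set_pmf P. pmf P x * (g x * q x))"
    using tower[OF fin, of H q g] rc unfolding q_def by blast
  have "(\<Sum>x\<in>set_pmf P. pmf P x * (g x - q x)\<^sup>2)
     = (\<Sum>x\<in>set_pmf P. pmf P x * (g x)\<^sup>2) - 2 * (\<Sum>x\<in>set_pmf P. pmf P x * (g x * q x))
       + (\<Sum>x\<in>set_pmf P. pmf P x * (q x * q x))"
    by (simp add: power2_eq_square algebra_simps sum.distrib sum_subtractf sum_distrib_left)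
  also have "\<dots> = (\<Sum>x\<in>set_pmf P. pmf P x * (g x)\<^sup>2) - (\<Sum>x\<in>set_pmf P. pmf P x * (q x * q x))"
    using t by simp
  also have "\<dots> \<le> (\<Sum>x\<in>set_pmf P. pmf P x * (g x)\<^sup>2)"
    by (simp add: sum_nonneg)
  finally show ?thesis unfolding Ef[OF fin] cond_exp_def q_def .
qed


lemma Rstar_L2:
  assumes fin: "finite (set_pmf P)"
  shows "measure_pmf.expectation P (\<lambda>x. (f x - Rstar P G f J n x)\<^sup>2) \<le> measure_pmf.expectation P (\<lambda>x. (f x)\<^sup>2)"
proof (induction n)
  case 0 then show ?case by simp
next
  case (Suc n)
  have "measure_pmf.expectation P (\<lambda>x. (f x - Rstar P G f J (Suc n) x)\<^sup>2)
     = measure_pmf.expectation P (\<lambda>x. ((f x - Rstar P G f J n x) - cond_exp P (\<lambda>y. f y - Rstar P G f J n y) (Xset G (J (Suc n))) x)\<^sup>2)"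
    by (simp add: diff_diff_eq)
  also have "\<dots> \<le> measure_pmf.expectation P (\<lambda>x. (f x - Rstar P G f J n x)\<^sup>2)"
    using contract[OF fin, of "\<lambda>y. f y - Rstar P G f J n y"] by simp
  finally show ?case using Suc by linarith
qed

lemma cs_bound:
  assumes fin: "finite (set_pmf P)" and x: "x \<in> set_pmf P"
  shows "(cond_exp_at P g H x)\<^sup>2 \<le> measure_pmf.expectation P (\<lambda>y. (g y)\<^sup>2) / measure_pmf.prob P {y. \<forall>j\<in>H. y j = x j}"
proof -
  define A where "A = {y. \<forall>j\<in>H. y j = x j}"
  define N where "N = (\<Sum>y\<in>set_pmf P. pmf P y * (g y * indicator A y))"
  define pr where "pr = (\<Sum>y\<in>set_pmf P. pmf P y * indicator A y)"
  define E2 where "E2 = (\<Sum>y\<in>set_pmf P. pmf P y * (g y)\<^sup>2)"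
  have prpos: "pr > 0" using cls_pos[OF fin x, of H] unfolding pr_def A_def Pf[OF fin] by simp
  have q: "cond_exp_at P g H x = N / pr" using ce_form[OF fin x, of g H] unfolding N_def pr_def A_def by simp
  have "N\<^sup>2 = (\<Sum>y\<in>set_pmf P. (sqrt (pmf P y) * g y) * (sqrt (pmf P y) * indicator A y))\<^sup>2"
    unfolding N_def by (rule arg_cong[where f="\<lambda>t. t\<^sup>2"], rule sum.cong[OF refl])
      (metis (no_types, opaque_lifting) real_sqrt_mult_self abs_of_nonneg pmf_nonneg mult.assoc mult.left_commute)
  also have "\<dots> \<le> (\<Sum>y\<in>set_pmf P. (sqrt (pmf P y) * g y)\<^sup>2) * (\<Sum>y\<in>set_pmf P. (sqrt (pmf P y) * indicator A y)\<^sup>2)"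
    by (rule Cauchy_Schwarz_ineq_sum)
  also have "\<dots> = E2 * pr"
  proof -
    have a: "(\<Sum>y\<in>set_pmf P. (sqrt (pmf P y) * g y)\<^sup>2) = E2"
      unfolding E2_def by (rule sum.cong[OF refl]) (simp add: power_mult_distrib pmf_nonneg)
    have b: "(\<Sum>y\<in>set_pmf P. (sqrt (pmf P y) * indicator A y)\<^sup>2) = pr"
      unfolding pr_def by (rule sum.cong[OF refl]) (simp add: power_mult_distrib pmf_nonneg indicator_def)
    show ?thesis using a b by simp
  qed
  finally have N2: "N\<^sup>2 \<le> E2 * pr" .
  have "(N / pr)\<^sup>2 = N\<^sup>2 / pr\<^sup>2" by (simp add: power_divide)
  also have "\<dots> \<le> E2 * pr / pr\<^sup>2" using N2 prpos by (simp add: divide_right_mono)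
  also have "\<dots> = E2 / pr" using prpos by (simp add: power2_eq_square)
  finally show ?thesis unfolding q Ef[OF fin] Pf[OF fin] E2_def pr_def A_def .
qed


lemma prob_mono_supp:
  assumes "\<forall>y\<in>set_pmf P. y \<in> B \<longrightarrow> y \<in> C"
  shows "measure_pmf.prob P B \<le> measure_pmf.prob P C"
proof -
  have "measure_pmf.prob P B = measure_pmf.prob P (B \<inter> set_pmf P)"
    by (simp add: measure_Int_set_pmf)
  also have "\<dots> \<le> measure_pmf.prob P C"
    by (rule measure_pmf.finite_measure_mono) (use assms in auto)
  finally show ?thesis .
qed

lemma finite_feat: "finite (feat_vecs p)"
proof -
  have "feat_vecs p \<subseteq> (\<lambda>B j. j \<in> B) ` Pow {..<p}"
  proof
    fix x assume "x \<in> feat_vecs p"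
    then have "{j. x j} \<subseteq> {..<p}" unfolding feat_vecs_def by (auto simp: not_less[symmetric])
    moreover have "x = (\<lambda>j. j \<in> {j. x j})" by simp
    ultimately show "x \<in> (\<lambda>B j. j \<in> B) ` Pow {..<p}" by blast
  qed
  then show ?thesis by (rule finite_subset) simp
qed

lemma finite_assign: "finite H \<Longrightarrow> finite (assignments H)"
proof -
  assume fH: "finite H"
  have "assignments H \<subseteq> (\<lambda>B j. j \<in> B) ` Pow H"
  proof
    fix x assume "x \<in> assignments H"
    then have "{j. x j} \<subseteq> H" unfolding assignments_def by auto
    moreover have "x = (\<lambda>j. j \<in> {j. x j})" by simp
    ultimately show "x \<in> (\<lambda>B j. j \<in> B) ` Pow H" by blast
  qed
  then show ?thesis by (rule finite_subset) (simp add: fH)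
qed


theorem lemma2:
  fixes P :: "(nat \<Rightarrow> bool) pmf" and p M :: nat and G :: "nat \<Rightarrow> nat set"
    and f :: "(nat \<Rightarrow> bool) \<Rightarrow> real" and J :: "nat \<Rightarrow> nat set"
  assumes supp: "set_pmf P \<subseteq> feat_vecs p"
    and M2: "M \<ge> 2"
    and cover: "(\<Union>m<M. G m) = {..<p}"
    and nonempty: "\<forall>m<M. G m \<noteq> {}"
    and disj: "\<forall>m<M. \<forall>k<M. m \<noteq> k \<longrightarrow> G m \<inter> G k = {}"
    and onehot: "\<forall>m<M. card (G m) > 1 \<longrightarrow> (AE x in measure_pmf P. card {j\<in>G m. x j} = 1)"
    and mean0: "measure_pmf.expectation P f = 0"
    and pmin_pos: "p_min P G M > 0"
    and J_sub: "\<forall>l\<ge>1. J l \<subseteq> {..<M} \<and> card (J l) \<le> 2"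
  shows "(\<forall>l>0. \<forall>J'. J' \<subseteq> {..<M} \<and> card J' \<le> 2 \<longrightarrow>
           (AE x in measure_pmf P.
              \<bar>cond_exp P (\<lambda>y. f y - Rstar P G f J (l - 1) y) (Xset G J') x\<bar>
                \<le> 3 * sqrt (measure_pmf.expectation P (\<lambda>x. (f x)\<^sup>2)) / p_min P G M))
       \<and> (\<forall>s>0. iota P G f J s
              \<le> 3 * real s * sqrt (measure_pmf.expectation P (\<lambda>x. (f x)\<^sup>2)) / p_min P G M)"
proof -
  define S where "S = set_pmf P"
  define pm where "pm = p_min P G M"
  define EF where "EF = measure_pmf.expectation P (\<lambda>x. (f x)\<^sup>2)"
  define B where "B = 3 * sqrt EF / pm"
  have fin: "finite (set_pmf P)" using finite_subset[OF supp finite_feat] .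
  have Gsub: "m < M \<Longrightarrow> G m \<subseteq> {..<p}" for m using cover by blast
  have EF0: "EF \<ge> 0" unfolding EF_def Ef[OF fin] by (intro sum_nonneg) (simp add: pmf_nonneg)
  have rep: "\<exists>i\<in>G m. \<forall>y\<in>S. y i = x i \<longrightarrow> (\<forall>j\<in>G m. y j = x j)" if m: "m < M" and x: "x \<in> S" for m x
  proof (cases "card (G m) > 1")
    case True
    then have ae: "\<forall>y\<in>S. card {j\<in>G m. y j} = 1"
      using onehot m unfolding S_def AE_measure_pmf_iff by blast
    then obtain i where i: "{j\<in>G m. x j} = {i}" using x by (meson card_1_singletonE)
    show ?thesis
    proof (intro bexI ballI impI)
      show "i \<in> G m" using i by blast
      fix y j assume y: "y \<in> S" and yi: "y i = x i" and j: "j \<in> G m"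
      obtain i' where i': "{j\<in>G m. y j} = {i'}" using ae y by (meson card_1_singletonE)
      have "x i" using i by blast
      then have "i \<in> {j\<in>G m. y j}" using yi i by blast
      then have "i' = i" using i' by simp
      then show "y j = x j" using i i' j by blast
    qed
  next
    case False
    have "finite (G m)" using Gsub[OF m] finite_subset by blast
    moreover have "G m \<noteq> {}" using nonempty m by blast
    ultimately have "card (G m) = 1" using False card_gt_0_iff[of "G m"] by linarith
    then obtain i where "G m = {i}" by (meson card_1_singletonE)
    then show ?thesis by auto
  qed
  define PS where "PS = {measure_pmf.prob P {x. x i = a \<and> x j = b} | l k i j a b.
       l < k \<and> k < M \<and> i \<in> G l \<and> j \<in> G k}"
  have pm_def': "pm = Min PS" unfolding pm_def PS_def p_min_def ..
  have finPS: "finite PS"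
  proof -
    have "PS \<subseteq> (\<lambda>(i,j,a,b). measure_pmf.prob P {x. x i = a \<and> x j = b}) ` ({..<p} \<times> {..<p} \<times> UNIV \<times> UNIV)"
    proof
      fix t assume "t \<in> PS"
      then obtain l k i j a b where t: "t = measure_pmf.prob P {x. x i = a \<and> x j = b}"
        and h: "l < k" "k < M" "i \<in> G l" "j \<in> G k" unfolding PS_def by blast
      have "i < p" "j < p" using Gsub[of l] Gsub[of k] h by auto
      then show "t \<in> (\<lambda>(i,j,a,b). measure_pmf.prob P {x. x i = a \<and> x j = b}) ` ({..<p} \<times> {..<p} \<times> UNIV \<times> UNIV)"
        using t by (auto intro!: image_eqI[where x="(i,j,a,b)"])
    qed
    then show ?thesis by (rule finite_subset) simp
  qed
  have pm_le: "pm \<le> measure_pmf.prob P {x. x i = a \<and> x j = b}"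
    if "l < k" "k < M" "i \<in> G l" "j \<in> G k" for l k i j a b
    unfolding pm_def' by (rule Min_le[OF finPS]) (unfold PS_def, use that in blast)
  have pm1: "pm \<le> 1"
  proof -
    obtain i where "i \<in> G 0" using nonempty M2 by fastforce
    moreover obtain j where "j \<in> G 1" using nonempty M2 by fastforce
    ultimately have "pm \<le> measure_pmf.prob P {x. x i = True \<and> x j = True}"
      using pm_le[of 0 1 i j True True] M2 by simp
    also have "\<dots> \<le> 1" by simp
    finally show ?thesis .
  qed
  have pm0: "pm > 0" using pmin_pos pm_def by simp
  have key: "pm \<le> measure_pmf.prob P {y. \<forall>j\<in>Xset G J'. y j = x j}"
    if J': "J' \<subseteq> {..<M}" "card J' \<le> 2" and x: "x \<in> S" for J' x
  proof -
    obtain m1 m2 where mm: "m1 < m2" "m2 < M" "J' \<subseteq> {m1, m2}"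
    proof -
      have fJ: "finite J'" using J' finite_subset by blast
      consider "card J' = 0" | "card J' = 1" | "card J' = 2" using J' by linarith
      then show ?thesis
      proof cases
        case 1 then have "J' = {}" using fJ by simp
        then show ?thesis using that[of 0 1] M2 by simp
      next
        case 2 then obtain m where m: "J' = {m}" by (meson card_1_singletonE)
        then have "m < M" using J' by auto
        show ?thesis
        proof (cases "m = 0")
          case True then show ?thesis using that[of 0 1] M2 m by simp
        next
          case False then show ?thesis using that[of 0 m] m \<open>m < M\<close> by auto
        qed
      next
        case 3 then obtain a b where ab: "a \<noteq> b" "J' = {a, b}" by (meson card_2_iff)
        then have "a < M" "b < M" using J' by auto
        show ?thesis
        proof (cases "a < b")
          case True then show ?thesis using that[of a b] ab \<open>b < M\<close> by auto
        next
          case False then have "b < a" using ab by simp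
          then show ?thesis using that[of b a] ab \<open>a < M\<close> by auto
        qed
      qed
    qed
    obtain i1 where i1: "i1 \<in> G m1" "\<forall>y\<in>S. y i1 = x i1 \<longrightarrow> (\<forall>j\<in>G m1. y j = x j)"
      using rep[OF _ x, of m1] mm by auto
    obtain i2 where i2: "i2 \<in> G m2" "\<forall>y\<in>S. y i2 = x i2 \<longrightarrow> (\<forall>j\<in>G m2. y j = x j)"
      using rep[OF _ x, of m2] mm by auto
    have "pm \<le> measure_pmf.prob P {y. y i1 = x i1 \<and> y i2 = x i2}"
      using pm_le[of m1 m2 i1 i2 "x i1" "x i2", OF mm(1) mm(2) i1(1) i2(1)] by simp
    also have "\<dots> \<le> measure_pmf.prob P {y. \<forall>j\<in>Xset G J'. y j = x j}"
    proof (rule prob_mono_supp, intro ballI impI)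
      fix y assume y: "y \<in> set_pmf P" and "y \<in> {y. y i1 = x i1 \<and> y i2 = x i2}"
      then have yy: "y \<in> S" "y i1 = x i1" "y i2 = x i2" unfolding S_def by auto
      have a1: "\<forall>j\<in>G m1. y j = x j" using i1(2) yy by blast
      have a2: "\<forall>j\<in>G m2. y j = x j" using i2(2) yy by blast
      have "\<forall>j\<in>Xset G J'. y j = x j"
      proof
        fix j assume "j \<in> Xset G J'"
        then obtain m where m: "m \<in> J'" "j \<in> G m" unfolding Xset_def by blast
        then have "m = m1 \<or> m = m2" using mm(3) by blast
        then show "y j = x j" using a1 a2 m(2) by blast
      qed
      then show "y \<in> {y. \<forall>j\<in>Xset G J'. y j = x j}" by simp
    qed
    finally show ?thesis .
  qed
  have bound: "\<bar>cond_exp_at P (\<lambda>y. f y - Rstar P G f J n y) (Xset G J') x\<bar> \<le> B"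
    if J': "J' \<subseteq> {..<M}" "card J' \<le> 2" and x: "x \<in> S" for J' x n
  proof -
    define q where "q = cond_exp_at P (\<lambda>y. f y - Rstar P G f J n y) (Xset G J') x"
    define pA where "pA = measure_pmf.prob P {y. \<forall>j\<in>Xset G J'. y j = x j}"
    define Eg where "Eg = measure_pmf.expectation P (\<lambda>y. (f y - Rstar P G f J n y)\<^sup>2)"
    have q2: "q\<^sup>2 \<le> Eg / pA" unfolding q_def Eg_def pA_def
      using cs_bound[OF fin, of x] x S_def by blast
    have pA: "pm \<le> pA" unfolding pA_def using key[OF J' x] .
    have Eg: "Eg \<le> EF" unfolding Eg_def EF_def by (rule Rstar_L2[OF fin])
    have Eg0: "Eg \<ge> 0" unfolding Eg_def Ef[OF fin] by (intro sum_nonneg) (simp add: pmf_nonneg)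
    have "Eg / pA \<le> EF / pm" using Eg Eg0 pA pm0 by (intro frac_le) auto
    then have "q\<^sup>2 \<le> EF / pm" using q2 by linarith
    then have "\<bar>q\<bar> \<le> sqrt (EF / pm)" using real_sqrt_le_mono by fastforce
    also have "\<dots> = sqrt EF / sqrt pm" by (simp add: real_sqrt_divide)
    also have "\<dots> \<le> sqrt EF / pm"
    proof -
      have "pm = sqrt pm * sqrt pm" using pm0 by simp
      also have "\<dots> \<le> sqrt pm * 1" using pm1 pm0 by (intro mult_left_mono) auto
      finally have "pm \<le> sqrt pm" by simp
      then show ?thesis using pm0 EF0 by (intro divide_left_mono) auto
    qed
    also have "\<dots> \<le> B" unfolding B_def using pm0 EF0 by (intro divide_right_mono) auto
    finally show ?thesis unfolding q_def .
  qed
  have B0: "B \<ge> 0" unfolding B_def using pm0 EF0 by simp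
  have part1: "\<forall>l>0. \<forall>J'. J' \<subseteq> {..<M} \<and> card J' \<le> 2 \<longrightarrow>
           (AE x in measure_pmf P.
              \<bar>cond_exp P (\<lambda>y. f y - Rstar P G f J (l - 1) y) (Xset G J') x\<bar> \<le> B)"
  proof (intro allI impI)
    fix l :: nat and J' :: "nat set" assume "0 < l" and h: "J' \<subseteq> {..<M} \<and> card J' \<le> 2"
    show "AE x in measure_pmf P.
              \<bar>cond_exp P (\<lambda>y. f y - Rstar P G f J (l - 1) y) (Xset G J') x\<bar> \<le> B"
      unfolding AE_measure_pmf_iff cond_exp_def
      using bound[of J' _ "l - 1"] h unfolding S_def by blast
  qed
  have part2: "iota P G f J s \<le> real s * B" for s
  proof -
    have "iota P G f J s \<le> real (card {1..s}) * B"
      unfolding iota_def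
    proof (rule sum_bounded_above)
      fix l assume l: "l \<in> {1..s}"
      define H where "H = Xset G (J l)"
      have Jl: "J l \<subseteq> {..<M}" "card (J l) \<le> 2" using J_sub l by auto
      have "H \<subseteq> {..<p}" unfolding H_def Xset_def using Jl(1) Gsub by blast
      then have fH: "finite H" using finite_subset by blast
      have ne: "assignments H \<noteq> {}" unfolding assignments_def by auto
      have all: "\<forall>c\<in>assignments H. \<bar>cond_exp_at P (\<lambda>y. f y - Rstar P G f J (l - 1) y) H c\<bar> \<le> B"
      proof
        fix c assume "c \<in> assignments H"
        show "\<bar>cond_exp_at P (\<lambda>y. f y - Rstar P G f J (l - 1) y) H c\<bar> \<le> B"
        proof (cases "measure_pmf.prob P {y. \<forall>j\<in>H. y j = c j} = 0")
          case True then show ?thesis using B0 by (simp add: cond_exp_at_def Let_def)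
        next
          case False
          have "{y. \<forall>j\<in>H. y j = c j} \<inter> S \<noteq> {}"
          proof
            assume "{y. \<forall>j\<in>H. y j = c j} \<inter> S = {}"
            then have "measure_pmf.prob P {y. \<forall>j\<in>H. y j = c j} = 0"
              using measure_Int_set_pmf[of P "{y. \<forall>j\<in>H. y j = c j}"] S_def by simp
            then show False using False by simp
          qed
          then obtain y where y: "y \<in> S" "\<forall>j\<in>H. y j = c j" by blast
          have "cond_exp_at P (\<lambda>y. f y - Rstar P G f J (l - 1) y) H c
              = cond_exp_at P (\<lambda>y. f y - Rstar P G f J (l - 1) y) H y"
            by (rule ce_cong) (use y in auto)
          then show ?thesis using bound[OF Jl y(1), of "l - 1"] H_def by simp
        qed
      qed
      show "Max ((\<lambda>c. \<bar>cond_exp_at P (\<lambda>y. f y - Rstar P G f J (l - 1) y) (Xset G (J l)) c\<bar>) `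
              assignments (Xset G (J l))) \<le> B"
        unfolding H_def[symmetric] using all by (subst Max_le_iff) (auto simp: finite_assign[OF fH] ne)
    qed
    then show ?thesis by simp
  qed
  show ?thesis
  proof (intro conjI)
    show "\<forall>l>0. \<forall>J'. J' \<subseteq> {..<M} \<and> card J' \<le> 2 \<longrightarrow>
           (AE x in measure_pmf P.
              \<bar>cond_exp P (\<lambda>y. f y - Rstar P G f J (l - 1) y) (Xset G J') x\<bar>
                \<le> 3 * sqrt (measure_pmf.expectation P (\<lambda>x. (f x)\<^sup>2)) / p_min P G M)"
      using part1 unfolding B_def EF_def pm_def .
    show "\<forall>s>0. iota P G f J s
              \<le> 3 * real s * sqrt (measure_pmf.expectation P (\<lambda>x. (f x)\<^sup>2)) / p_min P G M"
      using part2 unfolding B_def EF_def pm_def by (simp add: mult_ac)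
  qed
qed

end
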